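(* For $n>2$, the groups $G_{n,\mathcal{D}}^2$ and $G_{n+1}^2/N$ are isomorphic, where $N$ is the normal subgroup of $G_{n+1}^2$ generated by all commutators $a_{i(n+1)}a_{j(n+1)}a_{i(n+1)}^{-1}a_{j(n+1)}^{-1}$, $i,j\in\{1,\dots,n\}$.
   Context: $G_{N}^2$ is the group with generators $a_{ij}=a_{\{i,j\}}$ for $2$-element subsets $\{i,j\}\subset\{1,\dots,N\}$ and relations $a_{ij}^2=1$; $a_{ij}a_{kl}=a_{kl}a_{ij}$ for distinct $i,j,k,l$; $a_{ij}a_{ik}a_{jk}=a_{jk}a_{ik}a_{ij}$ for distinct $i,j,k$. $G_{n,\mathcal{D}}^2$ has generators $a_{ij}$ ($\{i,j\}\subset\{1,\dots,n\}$) and $\tau_i$ ($1\le i\le n$) with relations: $a_{ij}^2=1$; $a_{ij}a_{kl}=a_{kl}a_{ij}$ for distinct $i,j,k,l$; $a_{ij}a_{ik}a_{jk}=a_{jk}a_{ik}a_{ij}$ for distinct $i,j,k$; $\tau_i^2=1$; $\tau_i\tau_j=\tau_j\tau_i$; $\tau_i\tau_ja_{ij}\tau_j\tau_i=a_{ij}$; $a_{ij}\tau_k=\tau_ka_{ij}$ for distinct $i,j,k$. *)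

theory Defs
  imports "HOL-Algebra.Algebra"
begin

text \<open>A word over generators of type 'g: a list of letters (x, b), where b = False
means the generator x and b = True means its inverse.\<close>

type_synonym 'g word = "('g \<times> bool) list"

definition words :: "'g set \<Rightarrow> 'g word set" where
  "words S = lists (S \<times> UNIV)"

inductive_set pres_rel :: "'g set \<Rightarrow> ('g word \<times> 'g word) set \<Rightarrow> ('g word \<times> 'g word) set"
  for S E where
    refl: "w \<in> words S \<Longrightarrow> (w, w) \<in> pres_rel S E"
  | sym: "(u, v) \<in> pres_rel S E \<Longrightarrow> (v, u) \<in> pres_rel S E"
  | trans: "(u, v) \<in> pres_rel S E \<Longrightarrow> (v, w) \<in> pres_rel S E \<Longrightarrow> (u, w) \<in> pres_rel S E"
  | cancel: "x \<in> S \<Longrightarrow> ([(x, b), (x, \<not> b)], []) \<in> pres_rel S E"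
  | rel: "(u, v) \<in> E \<Longrightarrow> u \<in> words S \<Longrightarrow> v \<in> words S \<Longrightarrow> (u, v) \<in> pres_rel S E"
  | cong: "(u, v) \<in> pres_rel S E \<Longrightarrow> (u', v') \<in> pres_rel S E \<Longrightarrow> (u @ u', v @ v') \<in> pres_rel S E"

definition presented_group :: "'g set \<Rightarrow> ('g word \<times> 'g word) set \<Rightarrow> 'g word set monoid" where
  "presented_group S E =
     \<lparr> carrier = words S // pres_rel S E,
       monoid.mult = (\<lambda>A B. \<Union>a\<in>A. \<Union>b\<in>B. pres_rel S E `` {a @ b}),
       monoid.one = pres_rel S E `` {[]} \<rparr>"

definition pres_gen :: "'g set \<Rightarrow> ('g word \<times> 'g word) set \<Rightarrow> 'g \<Rightarrow> 'g word set" where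
  "pres_gen S E x = pres_rel S E `` {[(x, False)]}"

definition normal_closure :: "('a, 'b) monoid_scheme \<Rightarrow> 'a set \<Rightarrow> 'a set" where
  "normal_closure Gr Y =
     generate Gr (\<Union>g\<in>carrier Gr. (\<lambda>x. monoid.mult Gr (monoid.mult Gr g x) (m_inv Gr g)) ` Y)"

abbreviation g1 :: "'g \<Rightarrow> 'g word" where "g1 x \<equiv> [(x, False)]"

text \<open>Generators a_{ij} of G_N^2 are indexed by 2-element subsets of {1..N}.\<close>

definition GN_gens :: "nat \<Rightarrow> nat set set" where
  "GN_gens N = {{i, j} | i j. i \<in> {1..N} \<and> j \<in> {1..N} \<and> i \<noteq> j}"

definition GN_rels :: "nat \<Rightarrow> (nat set word \<times> nat set word) set" where
  "GN_rels N =
     {(g1 {i,j} @ g1 {i,j}, []) | i j. i \<in> {1..N} \<and> j \<in> {1..N} \<and> i \<noteq> j}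
   \<union> {(g1 {i,j} @ g1 {k,l}, g1 {k,l} @ g1 {i,j}) | i j k l.
        i \<in> {1..N} \<and> j \<in> {1..N} \<and> k \<in> {1..N} \<and> l \<in> {1..N} \<and>
        distinct [i, j, k, l]}
   \<union> {(g1 {i,j} @ g1 {i,k} @ g1 {j,k}, g1 {j,k} @ g1 {i,k} @ g1 {i,j}) | i j k.
        i \<in> {1..N} \<and> j \<in> {1..N} \<and> k \<in> {1..N} \<and> distinct [i, j, k]}"

definition G2 :: "nat \<Rightarrow> nat set word set monoid" where
  "G2 N = presented_group (GN_gens N) (GN_rels N)"

definition a_G2 :: "nat \<Rightarrow> nat \<Rightarrow> nat \<Rightarrow> nat set word set" where
  "a_G2 N i j = pres_gen (GN_gens N) (GN_rels N) {i, j}"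

text \<open>Generators of G_{n,D}^2: Inl {i,j} is a_{ij}, Inr i is tau_i.\<close>

definition GD_gens :: "nat \<Rightarrow> (nat set + nat) set" where
  "GD_gens n = Inl ` GN_gens n \<union> Inr ` {1..n}"

definition GD_rels :: "nat \<Rightarrow> ((nat set + nat) word \<times> (nat set + nat) word) set" where
  "GD_rels n =
     {(g1 (Inl {i,j}) @ g1 (Inl {i,j}), []) | i j. i \<in> {1..n} \<and> j \<in> {1..n} \<and> i \<noteq> j}
   \<union> {(g1 (Inl {i,j}) @ g1 (Inl {k,l}), g1 (Inl {k,l}) @ g1 (Inl {i,j})) | i j k l.
        i \<in> {1..n} \<and> j \<in> {1..n} \<and> k \<in> {1..n} \<and> l \<in> {1..n} \<and> distinct [i, j, k, l]}
   \<union> {(g1 (Inl {i,j}) @ g1 (Inl {i,k}) @ g1 (Inl {j,k}),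
        g1 (Inl {j,k}) @ g1 (Inl {i,k}) @ g1 (Inl {i,j})) | i j k.
        i \<in> {1..n} \<and> j \<in> {1..n} \<and> k \<in> {1..n} \<and> distinct [i, j, k]}
   \<union> {(g1 (Inr i) @ g1 (Inr i), []) | i. i \<in> {1..n}}
   \<union> {(g1 (Inr i) @ g1 (Inr j), g1 (Inr j) @ g1 (Inr i)) | i j. i \<in> {1..n} \<and> j \<in> {1..n}}
   \<union> {(g1 (Inr i) @ g1 (Inr j) @ g1 (Inl {i,j}) @ g1 (Inr j) @ g1 (Inr i), g1 (Inl {i,j})) | i j.
        i \<in> {1..n} \<and> j \<in> {1..n} \<and> i \<noteq> j}
   \<union> {(g1 (Inl {i,j}) @ g1 (Inr k), g1 (Inr k) @ g1 (Inl {i,j})) | i j k.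
        i \<in> {1..n} \<and> j \<in> {1..n} \<and> k \<in> {1..n} \<and> distinct [i, j, k]}"

definition G2D :: "nat \<Rightarrow> (nat set + nat) word set monoid" where
  "G2D n = presented_group (GD_gens n) (GD_rels n)"

end

theory Submission imports Defs begin

abbreviation cls :: "'g set \<Rightarrow> ('g word \<times> 'g word) set \<Rightarrow> 'g word \<Rightarrow> 'g word set" where
  "cls S E w \<equiv> pres_rel S E `` {w}"

lemma words_Nil[simp]: "[] \<in> words S" by (simp add: words_def)
lemma words_Cons[simp]: "(a # w \<in> words S) \<longleftrightarrow> fst a \<in> S \<and> w \<in> words S"
  by (cases a) (auto simp: words_def)
lemma words_append[simp]: "(u @ v \<in> words S) \<longleftrightarrow> u \<in> words S \<and> v \<in> words S"
  by (auto simp: words_def)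

lemma pres_rel_words: "(u,v) \<in> pres_rel S E \<Longrightarrow> u \<in> words S \<and> v \<in> words S"
  by (induction rule: pres_rel.induct) auto

lemma equiv_pres: "equiv (words S) (pres_rel S E)"
proof (rule equivI)
  show "pres_rel S E \<subseteq> words S \<times> words S" using pres_rel_words by fast
  show "refl_on (words S) (pres_rel S E)" unfolding refl_on_def by (blast intro: pres_rel.refl)
  show "sym (pres_rel S E)" unfolding sym_def by (blast intro: pres_rel.sym)
  show "trans (pres_rel S E)" unfolding trans_def by (blast intro: pres_rel.trans)
qed

lemma cls_eq_iff: "u \<in> words S \<Longrightarrow> v \<in> words S \<Longrightarrow> (cls S E u = cls S E v) \<longleftrightarrow> (u,v) \<in> pres_rel S E"
  by (rule eq_equiv_class_iff[OF equiv_pres])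

lemma pg_mult: assumes "u \<in> words S" "v \<in> words S"
  shows "cls S E u \<otimes>\<^bsub>presented_group S E\<^esub> cls S E v = cls S E (u@v)"
proof -
  have "(\<Union>a\<in>cls S E u. \<Union>b\<in>cls S E v. cls S E (a @ b)) = cls S E (u@v)"
  proof
    show "(\<Union>a\<in>cls S E u. \<Union>b\<in>cls S E v. cls S E (a @ b)) \<subseteq> cls S E (u@v)"
    proof clarsimp
      fix a b z assume "(u,a) \<in> pres_rel S E" "(v,b) \<in> pres_rel S E" "(a@b, z) \<in> pres_rel S E"
      then show "(u@v, z) \<in> pres_rel S E" by (meson pres_rel.cong pres_rel.trans)
    qed
    show "cls S E (u@v) \<subseteq> (\<Union>a\<in>cls S E u. \<Union>b\<in>cls S E v. cls S E (a @ b))"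
      using assms by (auto intro: pres_rel.refl)
  qed
  then show ?thesis by (simp add: presented_group_def)
qed

lemma pg_one: "\<one>\<^bsub>presented_group S E\<^esub> = cls S E []"
  by (simp add: presented_group_def)

lemma pg_carrier: "(C \<in> carrier (presented_group S E)) = (\<exists>w. w \<in> words S \<and> C = cls S E w)"
  by (auto simp: presented_group_def quotient_def)

lemma cls_carrier: "w \<in> words S \<Longrightarrow> cls S E w \<in> carrier (presented_group S E)"
  using pg_carrier by blast

definition winv :: "'g word \<Rightarrow> 'g word" where "winv w = rev (map (\<lambda>(x,b). (x, \<not>b)) w)"

lemma winv_words: "w \<in> words S \<Longrightarrow> winv w \<in> words S"
  by (auto simp: winv_def words_def)

lemma winv_cancel: "w \<in> words S \<Longrightarrow> (winv w @ w, []) \<in> pres_rel S E"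
proof (induction w)
  case Nil then show ?case by (simp add: winv_def pres_rel.refl)
next
  case (Cons a w)
  obtain x b where a: "a = (x,b)" by force
  have x: "x \<in> S" "w \<in> words S" using Cons a by auto
  have c: "([(x,\<not>b),(x,b)], []) \<in> pres_rel S E" using pres_rel.cancel[OF x(1), of "\<not>b" E] by simp
  have "([(x,\<not>b),(x,b)] @ w, [] @ w) \<in> pres_rel S E" by (rule pres_rel.cong[OF c pres_rel.refl[OF x(2)]])
  then have "(winv w @ ([(x,\<not>b),(x,b)] @ w), winv w @ w) \<in> pres_rel S E"
    by (intro pres_rel.cong[OF pres_rel.refl]) (auto simp: winv_words x)
  then have "(winv w @ ([(x,\<not>b),(x,b)] @ w), []) \<in> pres_rel S E"
    using Cons x by (blast intro: pres_rel.trans)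
  then show ?case by (simp add: a winv_def)
qed

lemma pg_group: "group (presented_group S E)"
proof (rule groupI)
  fix A B assume "A \<in> carrier (presented_group S E)" "B \<in> carrier (presented_group S E)"
  then obtain u v where "u \<in> words S" "v \<in> words S" "A = cls S E u" "B = cls S E v"
    by (auto simp: pg_carrier)
  then show "A \<otimes>\<^bsub>presented_group S E\<^esub> B \<in> carrier (presented_group S E)"
    by (simp add: pg_mult cls_carrier)
next
  show "\<one>\<^bsub>presented_group S E\<^esub> \<in> carrier (presented_group S E)"
    by (simp add: pg_one cls_carrier)
next
  fix A B C assume "A \<in> carrier (presented_group S E)" "B \<in> carrier (presented_group S E)"
     "C \<in> carrier (presented_group S E)"
  then show "A \<otimes>\<^bsub>presented_group S E\<^esub> B \<otimes>\<^bsub>presented_group S E\<^esub> C =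
          A \<otimes>\<^bsub>presented_group S E\<^esub> (B \<otimes>\<^bsub>presented_group S E\<^esub> C)"
    by (auto simp: pg_carrier pg_mult)
next
  fix A assume "A \<in> carrier (presented_group S E)"
  then show "\<one>\<^bsub>presented_group S E\<^esub> \<otimes>\<^bsub>presented_group S E\<^esub> A = A"
    by (auto simp: pg_carrier pg_mult pg_one)
next
  fix A assume "A \<in> carrier (presented_group S E)"
  then obtain w where w: "w \<in> words S" "A = cls S E w" by (auto simp: pg_carrier)
  have "cls S E (winv w @ w) = cls S E []"
    using winv_cancel[OF w(1)] w(1) winv_words[OF w(1)] by (subst cls_eq_iff) auto
  then show "\<exists>B\<in>carrier (presented_group S E). B \<otimes>\<^bsub>presented_group S E\<^esub> A = \<one>\<^bsub>presented_group S E\<^esub>"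
    using w winv_words[OF w(1)] pg_mult[OF winv_words[OF w(1)] w(1), of E]
    by (auto simp: pg_one intro!: bexI[OF _ cls_carrier[OF winv_words[OF w(1)]]])
qed

fun evalw :: "('a,'m) monoid_scheme \<Rightarrow> ('g \<Rightarrow> 'a) \<Rightarrow> 'g word \<Rightarrow> 'a" where
  "evalw H f [] = \<one>\<^bsub>H\<^esub>"
| "evalw H f ((x,b)#w) = (if b then inv\<^bsub>H\<^esub> (f x) else f x) \<otimes>\<^bsub>H\<^esub> evalw H f w"

lemma (in group) evalw_closed: "f \<in> S \<rightarrow> carrier G \<Longrightarrow> w \<in> words S \<Longrightarrow> evalw G f w \<in> carrier G"
proof (induction w)
  case (Cons a w)
  obtain x b where a: "a = (x,b)" by force
  have x: "x \<in> S" "w \<in> words S" using Cons(3) a by auto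
  have fx: "f x \<in> carrier G" using Cons(2) x(1) by (rule funcset_mem)
  have "evalw G f w \<in> carrier G" using Cons(1)[OF Cons(2) x(2)] .
  then show ?case using fx a by simp
qed simp

lemma (in group) evalw_append: "f \<in> S \<rightarrow> carrier G \<Longrightarrow> u \<in> words S \<Longrightarrow> v \<in> words S \<Longrightarrow>
   evalw G f (u @ v) = evalw G f u \<otimes> evalw G f v"
proof (induction u)
  case (Cons a w)
  obtain x b where a: "a = (x,b)" by force
  have x: "x \<in> S" "w \<in> words S" using Cons(3) a by auto
  have fx: "f x \<in> carrier G" using Cons(2) x(1) by (rule funcset_mem)
  have ih: "evalw G f (w @ v) = evalw G f w \<otimes> evalw G f v" using Cons(1)[OF Cons(2) x(2) Cons(4)] .
  have c: "evalw G f w \<in> carrier G" "evalw G f v \<in> carrier G"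
    using evalw_closed[OF Cons(2)] x(2) Cons(4) by auto
  show ?case using fx a ih c by (simp add: m_assoc)
qed (simp add: evalw_closed)

lemma (in group) evalw_respects:
  assumes f: "f \<in> S \<rightarrow> carrier G"
    and E: "\<And>u v. (u,v) \<in> E \<Longrightarrow> u \<in> words S \<Longrightarrow> v \<in> words S \<Longrightarrow> evalw G f u = evalw G f v"
    and r: "(u,v) \<in> pres_rel S E"
  shows "evalw G f u = evalw G f v"
  using r
proof (induction rule: pres_rel.induct)
  case (cancel x b) then have "f x \<in> carrier G" using f by (simp add: funcset_mem)
  then show ?case by simp
next
  case (rel u v) then show ?case using E by auto
next
  case (cong u v u' v')
  then show ?case using pres_rel_words[OF cong(1)] pres_rel_words[OF cong(2)]
    by (simp add: evalw_append[OF f])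
qed auto

definition pres_hom :: "('a,'m) monoid_scheme \<Rightarrow> ('g \<Rightarrow> 'a) \<Rightarrow> 'g word set \<Rightarrow> 'a" where
  "pres_hom H f A = the_elem (evalw H f ` A)"

locale pres_target = group G for G (structure) +
  fixes S :: "'g set" and E and f
  assumes f: "f \<in> S \<rightarrow> carrier G"
    and Erel: "\<And>u v. (u,v) \<in> E \<Longrightarrow> u \<in> words S \<Longrightarrow> v \<in> words S \<Longrightarrow> evalw G f u = evalw G f v"
begin

lemma pres_hom_cls: assumes "w \<in> words S" shows "pres_hom G f (cls S E w) = evalw G f w"
proof -
  have "evalw G f ` cls S E w = {evalw G f w}"
  proof
    show "evalw G f ` cls S E w \<subseteq> {evalw G f w}"
    proof
      fix y assume "y \<in> evalw G f ` cls S E w"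
      then obtain z where "(w,z) \<in> pres_rel S E" "y = evalw G f z" by auto
      then show "y \<in> {evalw G f w}" using evalw_respects[OF f Erel] by simp
    qed
    show "{evalw G f w} \<subseteq> evalw G f ` cls S E w" using assms by (auto intro: pres_rel.refl)
  qed
  then show ?thesis by (simp add: pres_hom_def)
qed

lemma pres_hom_hom: "pres_hom G f \<in> hom (presented_group S E) G"
proof (rule homI)
  fix A assume "A \<in> carrier (presented_group S E)"
  then obtain w where "w \<in> words S" "A = cls S E w" by (auto simp: pg_carrier)
  then show "pres_hom G f A \<in> carrier G" by (simp add: pres_hom_cls evalw_closed[OF f])
next
  fix A B assume "A \<in> carrier (presented_group S E)" "B \<in> carrier (presented_group S E)"
  then obtain u v where "u \<in> words S" "v \<in> words S" "A = cls S E u" "B = cls S E v"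
    by (auto simp: pg_carrier)
  then show "pres_hom G f (A \<otimes>\<^bsub>presented_group S E\<^esub> B) = pres_hom G f A \<otimes> pres_hom G f B"
    by (simp add: pg_mult pres_hom_cls evalw_append[OF f])
qed

lemma pres_hom_gen: "x \<in> S \<Longrightarrow> pres_hom G f (pres_gen S E x) = f x"
  unfolding pres_gen_def using f by (subst pres_hom_cls) (auto simp: funcset_mem)

end

lemma pg_letter: assumes "x \<in> S"
  shows "(if b then inv\<^bsub>presented_group S E\<^esub> (pres_gen S E x) else pres_gen S E x) = cls S E [(x,b)]"
proof (cases b)
  case True
  interpret P: group "presented_group S E" by (rule pg_group)
  have c: "([(x,True),(x,False)], []) \<in> pres_rel S E"
    using pres_rel.cancel[OF assms, of True E] by simp
  have "cls S E [(x,True)] \<otimes>\<^bsub>presented_group S E\<^esub> cls S E [(x,False)] = cls S E ([(x,True)] @ [(x,False)])"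
    by (rule pg_mult) (use assms in auto)
  also have "\<dots> = cls S E []"
    using c assms by (subst cls_eq_iff) auto
  finally have "cls S E [(x,True)] \<otimes>\<^bsub>presented_group S E\<^esub> cls S E [(x,False)] = cls S E []" .
  then have "inv\<^bsub>presented_group S E\<^esub> (pres_gen S E x) = cls S E [(x,True)]"
    unfolding pres_gen_def using assms
    by (intro P.inv_equality) (auto simp: pg_one intro!: cls_carrier)
  then show ?thesis using True by simp
qed (simp add: pres_gen_def)

lemma pg_gen_carrier: "x \<in> S \<Longrightarrow> pres_gen S E x \<in> carrier (presented_group S E)"
  unfolding pres_gen_def by (rule cls_carrier) simp

lemma pg_gen_Pi: "pres_gen S E \<in> S \<rightarrow> carrier (presented_group S E)"
  using pg_gen_carrier by (rule Pi_I)

lemma evalw_gens: "w \<in> words S \<Longrightarrow> evalw (presented_group S E) (pres_gen S E) w = cls S E w"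
proof (induction w)
  case Nil then show ?case by (simp add: pg_one)
next
  case (Cons a w)
  obtain x b where a: "a = (x,b)" by force
  have x: "x \<in> S" "w \<in> words S" using Cons a by auto
  have "evalw (presented_group S E) (pres_gen S E) (a # w) = cls S E [(x,b)] \<otimes>\<^bsub>presented_group S E\<^esub> cls S E w"
    using a Cons x pg_letter[OF x(1), of b E] by simp
  also have "\<dots> = cls S E (a # w)" using x a by (simp add: pg_mult)
  finally show ?case .
qed

lemma pg_rel: "(u,v) \<in> E \<Longrightarrow> u \<in> words S \<Longrightarrow> v \<in> words S \<Longrightarrow>
  evalw (presented_group S E) (pres_gen S E) u = evalw (presented_group S E) (pres_gen S E) v"
  by (simp add: evalw_gens cls_eq_iff pres_rel.rel)

lemma hom_evalw:
  assumes "group G" "group H" "h \<in> hom G H" "f \<in> S \<rightarrow> carrier G" "w \<in> words S"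
  shows "h (evalw G f w) = evalw H (h \<circ> f) w"
  using assms(5)
proof (induction w)
  case Nil then show ?case using hom_one[OF assms(3,1,2)] by simp
next
  case (Cons a w)
  interpret gh: group_hom G H h using assms by (simp add: group_hom_def group_hom_axioms_def)
  obtain x b where a: "a = (x,b)" by force
  have x: "x \<in> S" "w \<in> words S" using Cons a by auto
  then have fx: "f x \<in> carrier G" using assms(4) by auto
  show ?case using Cons x fx a gh.G.evalw_closed[OF assms(4) x(2)] by simp
qed

lemma evalw_cong: "(\<And>x. x \<in> S \<Longrightarrow> f x = g x) \<Longrightarrow> w \<in> words S \<Longrightarrow> evalw H f w = evalw H g w"
  by (induction H f w rule: evalw.induct) auto

lemma pg_homs_agree:
  assumes "group H" "h1 \<in> hom (presented_group S E) H" "h2 \<in> hom (presented_group S E) H"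
    "\<And>x. x \<in> S \<Longrightarrow> h1 (pres_gen S E x) = h2 (pres_gen S E x)"
    "A \<in> carrier (presented_group S E)"
  shows "h1 A = h2 A"
proof -
  obtain w where w: "w \<in> words S" "A = cls S E w" using assms(5) by (auto simp: pg_carrier)
  then have "A = evalw (presented_group S E) (pres_gen S E) w" by (simp add: evalw_gens)
  then show ?thesis
    using hom_evalw[OF pg_group assms(1) assms(2) pg_gen_Pi w(1)]
      hom_evalw[OF pg_group assms(1) assms(3) pg_gen_Pi w(1)]
      evalw_cong[of S "h1 \<circ> pres_gen S E" "h2 \<circ> pres_gen S E", OF _ w(1)] assms(4)
    by simp
qed

lemma pg_hom_onto:
  assumes "group G" "h \<in> hom G (presented_group S E)"
    "\<And>x. x \<in> S \<Longrightarrow> pres_gen S E x \<in> h ` carrier G"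
  shows "h ` carrier G = carrier (presented_group S E)"
proof
  show "h ` carrier G \<subseteq> carrier (presented_group S E)" using assms(2) by (auto simp: hom_def)
next
  interpret gh: group_hom G "presented_group S E" h
    using assms pg_group by (simp add: group_hom_def group_hom_axioms_def)
  interpret K: subgroup "h ` carrier G" "presented_group S E" by (rule gh.img_is_subgroup)
  show "carrier (presented_group S E) \<subseteq> h ` carrier G"
  proof
    fix A assume "A \<in> carrier (presented_group S E)"
    then obtain w where w: "w \<in> words S" "A = cls S E w" by (auto simp: pg_carrier)
    have "evalw (presented_group S E) (pres_gen S E) w \<in> h ` carrier G"
      using w(1)
    proof (induction w)
      case Nil then show ?case using K.one_closed by simp
    next
      case (Cons a w)
      obtain x b where a: "a = (x,b)" by force
      have x: "x \<in> S" "w \<in> words S" using Cons a by auto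
      have ih: "evalw (presented_group S E) (pres_gen S E) w \<in> h ` carrier G" using Cons x by simp
      show ?case using ih a assms(3)[OF x(1)] by (simp add: K.m_closed K.m_inv_closed)
    qed
    then show "A \<in> h ` carrier G" using w by (simp add: evalw_gens)
  qed
qed

lemma in_GN: "i \<in> {1..N} \<Longrightarrow> j \<in> {1..N} \<Longrightarrow> i \<noteq> j \<Longrightarrow> {i,j} \<in> GN_gens N"
  unfolding GN_gens_def by blast

lemma in_GD_Inl: "i \<in> {1..n} \<Longrightarrow> j \<in> {1..n} \<Longrightarrow> i \<noteq> j \<Longrightarrow> Inl {i,j} \<in> GD_gens n"
  unfolding GD_gens_def using in_GN by blast

lemma in_GD_Inr: "i \<in> {1..n} \<Longrightarrow> Inr i \<in> GD_gens n"
  unfolding GD_gens_def by blast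

definition bD :: "nat \<Rightarrow> nat set \<Rightarrow> (nat set + nat) word set" where
  "bD n Z = pres_gen (GD_gens n) (GD_rels n) (Inl Z)"
definition tD :: "nat \<Rightarrow> nat \<Rightarrow> (nat set + nat) word set" where
  "tD n i = pres_gen (GD_gens n) (GD_rels n) (Inr i)"

lemma G2D_group: "group (G2D n)" unfolding G2D_def by (rule pg_group)

lemma bD_carrier: "i \<in> {1..n} \<Longrightarrow> j \<in> {1..n} \<Longrightarrow> i \<noteq> j \<Longrightarrow> bD n {i,j} \<in> carrier (G2D n)"
  unfolding bD_def G2D_def by (rule pg_gen_carrier) (rule in_GD_Inl)
lemma tD_carrier: "i \<in> {1..n} \<Longrightarrow> tD n i \<in> carrier (G2D n)"
  unfolding tD_def G2D_def by (rule pg_gen_carrier) (rule in_GD_Inr)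

lemma D1: assumes "i \<in> {1..n}" "j \<in> {1..n}" "i \<noteq> j"
  shows "bD n {i,j} \<otimes>\<^bsub>G2D n\<^esub> bD n {i,j} = \<one>\<^bsub>G2D n\<^esub>"
proof -
  interpret D: group "G2D n" by (rule G2D_group)
  have r: "(g1 (Inl {i,j}) @ g1 (Inl {i,j}), []) \<in> GD_rels n" unfolding GD_rels_def using assms by blast
  have "evalw (G2D n) (pres_gen (GD_gens n) (GD_rels n)) (g1 (Inl {i,j}) @ g1 (Inl {i,j})) =
        evalw (G2D n) (pres_gen (GD_gens n) (GD_rels n)) []"
    unfolding G2D_def by (rule pg_rel[OF r]) (use assms in \<open>auto intro!: in_GD_Inl in_GD_Inr\<close>)
  then show ?thesis using bD_carrier[OF assms] by (simp add: bD_def)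
qed

lemma D2: assumes "i \<in> {1..n}" "j \<in> {1..n}" "k \<in> {1..n}" "l \<in> {1..n}" "distinct [i,j,k,l]"
  shows "bD n {i,j} \<otimes>\<^bsub>G2D n\<^esub> bD n {k,l} = bD n {k,l} \<otimes>\<^bsub>G2D n\<^esub> bD n {i,j}"
proof -
  interpret D: group "G2D n" by (rule G2D_group)
  have r: "(g1 (Inl {i,j}) @ g1 (Inl {k,l}), g1 (Inl {k,l}) @ g1 (Inl {i,j})) \<in> GD_rels n"
    unfolding GD_rels_def using assms by blast
  have "evalw (G2D n) (pres_gen (GD_gens n) (GD_rels n)) (g1 (Inl {i,j}) @ g1 (Inl {k,l})) =
        evalw (G2D n) (pres_gen (GD_gens n) (GD_rels n)) (g1 (Inl {k,l}) @ g1 (Inl {i,j}))"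
    unfolding G2D_def by (rule pg_rel[OF r]) (use assms in \<open>auto intro!: in_GD_Inl in_GD_Inr\<close>)
  then show ?thesis using bD_carrier assms by (simp add: bD_def)
qed

lemma D3: assumes "i \<in> {1..n}" "j \<in> {1..n}" "k \<in> {1..n}" "distinct [i,j,k]"
  shows "bD n {i,j} \<otimes>\<^bsub>G2D n\<^esub> (bD n {i,k} \<otimes>\<^bsub>G2D n\<^esub> bD n {j,k}) =
         bD n {j,k} \<otimes>\<^bsub>G2D n\<^esub> (bD n {i,k} \<otimes>\<^bsub>G2D n\<^esub> bD n {i,j})"
proof -
  interpret D: group "G2D n" by (rule G2D_group)
  have r: "(g1 (Inl {i,j}) @ g1 (Inl {i,k}) @ g1 (Inl {j,k}), g1 (Inl {j,k}) @ g1 (Inl {i,k}) @ g1 (Inl {i,j})) \<in> GD_rels n"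
    unfolding GD_rels_def using assms by blast
  have "evalw (G2D n) (pres_gen (GD_gens n) (GD_rels n)) (g1 (Inl {i,j}) @ g1 (Inl {i,k}) @ g1 (Inl {j,k})) =
        evalw (G2D n) (pres_gen (GD_gens n) (GD_rels n)) (g1 (Inl {j,k}) @ g1 (Inl {i,k}) @ g1 (Inl {i,j}))"
    unfolding G2D_def by (rule pg_rel[OF r]) (use assms in \<open>auto intro!: in_GD_Inl in_GD_Inr\<close>)
  then show ?thesis using bD_carrier assms by (simp add: bD_def)
qed

lemma D4: assumes "i \<in> {1..n}"
  shows "tD n i \<otimes>\<^bsub>G2D n\<^esub> tD n i = \<one>\<^bsub>G2D n\<^esub>"
proof -
  interpret D: group "G2D n" by (rule G2D_group)
  have r: "(g1 (Inr i) @ g1 (Inr i), []) \<in> GD_rels n" unfolding GD_rels_def using assms by blast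
  have "evalw (G2D n) (pres_gen (GD_gens n) (GD_rels n)) (g1 (Inr i) @ g1 (Inr i)) =
        evalw (G2D n) (pres_gen (GD_gens n) (GD_rels n)) []"
    unfolding G2D_def by (rule pg_rel[OF r]) (use assms in \<open>auto intro!: in_GD_Inl in_GD_Inr\<close>)
  then show ?thesis using tD_carrier[OF assms] by (simp add: tD_def)
qed

lemma D5: assumes "i \<in> {1..n}" "j \<in> {1..n}"
  shows "tD n i \<otimes>\<^bsub>G2D n\<^esub> tD n j = tD n j \<otimes>\<^bsub>G2D n\<^esub> tD n i"
proof -
  interpret D: group "G2D n" by (rule G2D_group)
  have r: "(g1 (Inr i) @ g1 (Inr j), g1 (Inr j) @ g1 (Inr i)) \<in> GD_rels n" unfolding GD_rels_def using assms by blast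
  have "evalw (G2D n) (pres_gen (GD_gens n) (GD_rels n)) (g1 (Inr i) @ g1 (Inr j)) =
        evalw (G2D n) (pres_gen (GD_gens n) (GD_rels n)) (g1 (Inr j) @ g1 (Inr i))"
    unfolding G2D_def by (rule pg_rel[OF r]) (use assms in \<open>auto intro!: in_GD_Inl in_GD_Inr\<close>)
  then show ?thesis using tD_carrier assms by (simp add: tD_def)
qed

lemma D6: assumes "i \<in> {1..n}" "j \<in> {1..n}" "i \<noteq> j"
  shows "tD n i \<otimes>\<^bsub>G2D n\<^esub> (tD n j \<otimes>\<^bsub>G2D n\<^esub> (bD n {i,j} \<otimes>\<^bsub>G2D n\<^esub> (tD n j \<otimes>\<^bsub>G2D n\<^esub> tD n i))) = bD n {i,j}"
proof -
  interpret D: group "G2D n" by (rule G2D_group)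
  have r: "(g1 (Inr i) @ g1 (Inr j) @ g1 (Inl {i,j}) @ g1 (Inr j) @ g1 (Inr i), g1 (Inl {i,j})) \<in> GD_rels n"
    unfolding GD_rels_def using assms by blast
  have "evalw (G2D n) (pres_gen (GD_gens n) (GD_rels n)) (g1 (Inr i) @ g1 (Inr j) @ g1 (Inl {i,j}) @ g1 (Inr j) @ g1 (Inr i)) =
        evalw (G2D n) (pres_gen (GD_gens n) (GD_rels n)) (g1 (Inl {i,j}))"
    unfolding G2D_def by (rule pg_rel[OF r]) (use assms in \<open>auto intro!: in_GD_Inl in_GD_Inr\<close>)
  then show ?thesis using tD_carrier bD_carrier assms by (simp add: tD_def bD_def)
qed

lemma D7: assumes "i \<in> {1..n}" "j \<in> {1..n}" "k \<in> {1..n}" "distinct [i,j,k]"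
  shows "bD n {i,j} \<otimes>\<^bsub>G2D n\<^esub> tD n k = tD n k \<otimes>\<^bsub>G2D n\<^esub> bD n {i,j}"
proof -
  interpret D: group "G2D n" by (rule G2D_group)
  have r: "(g1 (Inl {i,j}) @ g1 (Inr k), g1 (Inr k) @ g1 (Inl {i,j})) \<in> GD_rels n"
    unfolding GD_rels_def using assms by blast
  have "evalw (G2D n) (pres_gen (GD_gens n) (GD_rels n)) (g1 (Inl {i,j}) @ g1 (Inr k)) =
        evalw (G2D n) (pres_gen (GD_gens n) (GD_rels n)) (g1 (Inr k) @ g1 (Inl {i,j}))"
    unfolding G2D_def by (rule pg_rel[OF r]) (use assms in \<open>auto intro!: in_GD_Inl in_GD_Inr\<close>)
  then show ?thesis using bD_carrier tD_carrier assms by (simp add: bD_def tD_def)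
qed

section \<open>Abstract group identities\<close>

context group begin

lemma invol_L1:
  assumes c: "x \<in> carrier G" "y \<in> carrier G" "a \<in> carrier G"
    and xx: "x \<otimes> x = \<one>" and yy: "y \<otimes> y = \<one>" and comm: "x \<otimes> y = y \<otimes> x"
    and H: "x \<otimes> (y \<otimes> (a \<otimes> (y \<otimes> x))) = a"
  shows "a \<otimes> (x \<otimes> y) = y \<otimes> (x \<otimes> a)"
proof -
  have xx': "x \<otimes> (x \<otimes> z) = z" if "z \<in> carrier G" for z
    using that c by (simp add: m_assoc[symmetric] xx)
  have "a \<otimes> (x \<otimes> y) = (x \<otimes> (y \<otimes> (a \<otimes> (y \<otimes> x)))) \<otimes> (x \<otimes> y)" using H by simp
  also have "\<dots> = x \<otimes> (y \<otimes> (a \<otimes> (y \<otimes> (x \<otimes> (x \<otimes> y)))))" using c by (simp add: m_assoc)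
  also have "\<dots> = x \<otimes> (y \<otimes> a)" using c by (simp add: xx' yy)
  also have "\<dots> = y \<otimes> (x \<otimes> a)" using c by (simp add: m_assoc[symmetric] comm)
  finally show ?thesis .
qed

lemma invol_L2:
  assumes c: "x \<in> carrier G" "y \<in> carrier G" "a \<in> carrier G"
    and xx: "x \<otimes> x = \<one>" and yy: "y \<otimes> y = \<one>" and comm: "x \<otimes> y = y \<otimes> x"
    and H: "x \<otimes> (y \<otimes> (a \<otimes> (y \<otimes> x))) = a"
  shows "x \<otimes> (a \<otimes> y) = y \<otimes> (a \<otimes> x)"
proof -
  have e: "x \<otimes> (y \<otimes> a) = a \<otimes> (x \<otimes> y)"
    using invol_L1[OF assms] c by (simp add: m_assoc[symmetric] comm)
  have "x \<otimes> (a \<otimes> y) = (y \<otimes> y) \<otimes> (x \<otimes> (a \<otimes> y))" using c by (simp add: yy)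
  also have "\<dots> = y \<otimes> ((y \<otimes> x) \<otimes> (a \<otimes> y))" using c by (simp add: m_assoc)
  also have "\<dots> = y \<otimes> ((x \<otimes> (y \<otimes> a)) \<otimes> y)"
    by (simp only: comm[symmetric]) (use c in \<open>simp add: m_assoc\<close>)
  also have "\<dots> = y \<otimes> ((a \<otimes> (x \<otimes> y)) \<otimes> y)" using e by simp
  also have "\<dots> = y \<otimes> (a \<otimes> (x \<otimes> (y \<otimes> y)))" using c by (simp add: m_assoc)
  also have "\<dots> = y \<otimes> (a \<otimes> x)" using c by (simp add: yy)
  finally show ?thesis .
qed

lemma invol_L3:
  assumes c: "x \<in> carrier G" "y \<in> carrier G" "a \<in> carrier G"
    and xx: "x \<otimes> x = \<one>" and yy: "y \<otimes> y = \<one>" and comm: "x \<otimes> y = y \<otimes> x"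
    and H: "a \<otimes> (x \<otimes> y) = y \<otimes> (x \<otimes> a)"
  shows "x \<otimes> (y \<otimes> (a \<otimes> (y \<otimes> x))) = a"
proof -
  have "x \<otimes> (y \<otimes> (a \<otimes> (y \<otimes> x))) = x \<otimes> (y \<otimes> (y \<otimes> (x \<otimes> a)))" using H comm by simp
  also have "\<dots> = x \<otimes> ((y \<otimes> y) \<otimes> (x \<otimes> a))" using c by (simp add: m_assoc)
  also have "\<dots> = (x \<otimes> x) \<otimes> a" using c by (simp add: yy m_assoc)
  also have "\<dots> = a" using c by (simp add: xx)
  finally show ?thesis .
qed

lemma comm_from_commutator:
  assumes c: "p \<in> carrier G" "q \<in> carrier G"
    and H: "p \<otimes> q \<otimes> inv p \<otimes> inv q = \<one>"
  shows "p \<otimes> q = q \<otimes> p"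
proof -
  have i1: "inv q \<otimes> (q \<otimes> p) = p" using c by (simp add: m_assoc[symmetric])
  have "p \<otimes> q = p \<otimes> q \<otimes> inv p \<otimes> (inv q \<otimes> q) \<otimes> p" using c by (simp add: m_assoc)
  also have "\<dots> = (p \<otimes> q \<otimes> inv p \<otimes> inv q) \<otimes> (q \<otimes> p)" using c by (simp add: m_assoc i1)
  also have "\<dots> = q \<otimes> p" using c H by simp
  finally show ?thesis .
qed

end

section \<open>The map phi from G2 (Suc n) to G2D n\<close>

definition fphi :: "nat \<Rightarrow> nat set \<Rightarrow> (nat set + nat) word set" where
  "fphi n Z = (if Suc n \<in> Z then tD n (Min Z) else bD n Z)"

lemma fphi_eq:
  assumes "i \<in> {1..Suc n}" "j \<in> {1..Suc n}" "i \<noteq> j"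
  shows "fphi n {i,j} = (if i = Suc n then tD n j else if j = Suc n then tD n i else bD n {i,j})"
  using assms by (auto simp: fphi_def min_def)

lemma fphi_carrier:
  assumes "i \<in> {1..Suc n}" "j \<in> {1..Suc n}" "i \<noteq> j"
  shows "fphi n {i,j} \<in> carrier (G2D n)"
  using assms by (auto simp: fphi_eq intro!: tD_carrier bD_carrier)

lemma fphi_Pi: "fphi n \<in> GN_gens (Suc n) \<rightarrow> carrier (G2D n)"
  unfolding GN_gens_def using fphi_carrier by blast

lemma fphi_sq:
  assumes "i \<in> {1..Suc n}" "j \<in> {1..Suc n}" "i \<noteq> j"
  shows "fphi n {i,j} \<otimes>\<^bsub>G2D n\<^esub> fphi n {i,j} = \<one>\<^bsub>G2D n\<^esub>"
proof -
  have in1: "x \<in> {1..n}" if "x \<in> {1..Suc n}" "x \<noteq> Suc n" for x using that by auto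
  consider "i = Suc n" | "j = Suc n" | "i \<noteq> Suc n" "j \<noteq> Suc n" by blast
  then show ?thesis
  proof cases
    case 1 then have "j \<in> {1..n}" using assms in1 by auto
    then show ?thesis using 1 assms D4[of j n] by (simp add: fphi_eq)
  next
    case 2 then have "i \<in> {1..n}" using assms in1 by auto
    then show ?thesis using 2 assms D4[of i n] by (simp add: fphi_eq)
  next
    case 3 then have "i \<in> {1..n}" "j \<in> {1..n}" using assms in1 by auto
    then show ?thesis using 3 assms D1[of i n j] by (simp add: fphi_eq)
  qed
qed

lemma phi_rels:
  assumes "(u,v) \<in> GN_rels (Suc n)"
  shows "evalw (G2D n) (fphi n) u = evalw (G2D n) (fphi n) v"
proof -
  interpret D: group "G2D n" by (rule G2D_group)
  have in1: "x \<in> {1..n}" if "x \<in> {1..Suc n}" "x \<noteq> Suc n" for x using that by auto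
  from assms consider
      (r1) i j where "u = g1 {i,j} @ g1 {i,j}" "v = []" "i \<in> {1..Suc n}" "j \<in> {1..Suc n}" "i \<noteq> j"
    | (r2) i j k l where "u = g1 {i,j} @ g1 {k,l}" "v = g1 {k,l} @ g1 {i,j}"
        "i \<in> {1..Suc n}" "j \<in> {1..Suc n}" "k \<in> {1..Suc n}" "l \<in> {1..Suc n}" "distinct [i,j,k,l]"
    | (r3) i j k where "u = g1 {i,j} @ g1 {i,k} @ g1 {j,k}" "v = g1 {j,k} @ g1 {i,k} @ g1 {i,j}"
        "i \<in> {1..Suc n}" "j \<in> {1..Suc n}" "k \<in> {1..Suc n}" "distinct [i,j,k]"
    unfolding GN_rels_def by blast
  then show ?thesis
  proof cases
    case r1 then show ?thesis using fphi_sq[of i n j] fphi_carrier[of i n j] by simp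
  next
    case r2
    have c: "fphi n {i,j} \<in> carrier (G2D n)" "fphi n {k,l} \<in> carrier (G2D n)"
      using r2 by (auto intro!: fphi_carrier)
    have "fphi n {i,j} \<otimes>\<^bsub>G2D n\<^esub> fphi n {k,l} = fphi n {k,l} \<otimes>\<^bsub>G2D n\<^esub> fphi n {i,j}"
    proof -
      consider "i = Suc n" | "j = Suc n" | "k = Suc n" | "l = Suc n"
        | "i \<noteq> Suc n" "j \<noteq> Suc n" "k \<noteq> Suc n" "l \<noteq> Suc n" by blast
      then show ?thesis
      proof cases
        case 1
        then have "j \<in> {1..n}" "k \<in> {1..n}" "l \<in> {1..n}" using r2 in1 by auto
        then show ?thesis using r2 1 D7[of k n l j] by (simp add: fphi_eq)
      next
        case 2
        then have "i \<in> {1..n}" "k \<in> {1..n}" "l \<in> {1..n}" using r2 in1 by auto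
        then show ?thesis using r2 2 D7[of k n l i] by (simp add: fphi_eq)
      next
        case 3
        then have "i \<in> {1..n}" "j \<in> {1..n}" "l \<in> {1..n}" using r2 in1 by auto
        then show ?thesis using r2 3 D7[of i n j l] by (simp add: fphi_eq)
      next
        case 4
        then have "i \<in> {1..n}" "j \<in> {1..n}" "k \<in> {1..n}" using r2 in1 by auto
        then show ?thesis using r2 4 D7[of i n j k] by (simp add: fphi_eq)
      next
        case 5
        then have "i \<in> {1..n}" "j \<in> {1..n}" "k \<in> {1..n}" "l \<in> {1..n}" using r2 in1 by auto
        then show ?thesis using r2 5 D2[of i n j k l] by (simp add: fphi_eq)
      qed
    qed
    then show ?thesis using r2 c by simp
  next
    case r3
    have c: "fphi n {i,j} \<in> carrier (G2D n)" "fphi n {i,k} \<in> carrier (G2D n)" "fphi n {j,k} \<in> carrier (G2D n)"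
      using r3 by (auto intro!: fphi_carrier)
    have "fphi n {i,j} \<otimes>\<^bsub>G2D n\<^esub> (fphi n {i,k} \<otimes>\<^bsub>G2D n\<^esub> fphi n {j,k}) =
          fphi n {j,k} \<otimes>\<^bsub>G2D n\<^esub> (fphi n {i,k} \<otimes>\<^bsub>G2D n\<^esub> fphi n {i,j})"
    proof -
      consider "i = Suc n" | "j = Suc n" | "k = Suc n" | "i \<noteq> Suc n" "j \<noteq> Suc n" "k \<noteq> Suc n" by blast
      then show ?thesis
      proof cases
        case 1
        then have jk: "j \<in> {1..n}" "k \<in> {1..n}" "j \<noteq> k" using r3 in1 by auto
        have "bD n {j,k} \<otimes>\<^bsub>G2D n\<^esub> (tD n k \<otimes>\<^bsub>G2D n\<^esub> tD n j) = tD n j \<otimes>\<^bsub>G2D n\<^esub> (tD n k \<otimes>\<^bsub>G2D n\<^esub> bD n {j,k})"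
        proof (rule D.invol_L1)
          show "tD n k \<otimes>\<^bsub>G2D n\<^esub> (tD n j \<otimes>\<^bsub>G2D n\<^esub> (bD n {j,k} \<otimes>\<^bsub>G2D n\<^esub> (tD n j \<otimes>\<^bsub>G2D n\<^esub> tD n k))) = bD n {j,k}"
            using D6[of k n j] jk by (simp add: insert_commute)
        qed (use jk in \<open>simp_all add: tD_carrier bD_carrier D4 D5\<close>)
        then show ?thesis using r3 1 jk by (simp add: fphi_eq)
      next
        case 2
        then have ik: "i \<in> {1..n}" "k \<in> {1..n}" "i \<noteq> k" using r3 in1 by auto
        have "tD n i \<otimes>\<^bsub>G2D n\<^esub> (bD n {i,k} \<otimes>\<^bsub>G2D n\<^esub> tD n k) = tD n k \<otimes>\<^bsub>G2D n\<^esub> (bD n {i,k} \<otimes>\<^bsub>G2D n\<^esub> tD n i)"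
        proof (rule D.invol_L2)
          show "tD n i \<otimes>\<^bsub>G2D n\<^esub> (tD n k \<otimes>\<^bsub>G2D n\<^esub> (bD n {i,k} \<otimes>\<^bsub>G2D n\<^esub> (tD n k \<otimes>\<^bsub>G2D n\<^esub> tD n i))) = bD n {i,k}"
            using D6[of i n k] ik by simp
        qed (use ik in \<open>simp_all add: tD_carrier bD_carrier D4 D5\<close>)
        then show ?thesis using r3 2 ik by (simp add: fphi_eq)
      next
        case 3
        then have ij: "i \<in> {1..n}" "j \<in> {1..n}" "i \<noteq> j" using r3 in1 by auto
        have "bD n {i,j} \<otimes>\<^bsub>G2D n\<^esub> (tD n i \<otimes>\<^bsub>G2D n\<^esub> tD n j) = tD n j \<otimes>\<^bsub>G2D n\<^esub> (tD n i \<otimes>\<^bsub>G2D n\<^esub> bD n {i,j})"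
        proof (rule D.invol_L1)
          show "tD n i \<otimes>\<^bsub>G2D n\<^esub> (tD n j \<otimes>\<^bsub>G2D n\<^esub> (bD n {i,j} \<otimes>\<^bsub>G2D n\<^esub> (tD n j \<otimes>\<^bsub>G2D n\<^esub> tD n i))) = bD n {i,j}"
            using D6[of i n j] ij by simp
        qed (use ij in \<open>simp_all add: tD_carrier bD_carrier D4 D5\<close>)
        then show ?thesis using r3 3 ij by (simp add: fphi_eq)
      next
        case 4
        then have "i \<in> {1..n}" "j \<in> {1..n}" "k \<in> {1..n}" using r3 in1 by auto
        then show ?thesis using r3 4 D3[of i n j k] by (simp add: fphi_eq)
      qed
    qed
    then show ?thesis using r3 c by simp
  qed
qed

interpretation phi: pres_target "G2D n" "GN_gens (Suc n)" "GN_rels (Suc n)" "fphi n"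
  by (rule pres_target.intro[OF G2D_group]) (unfold_locales, rule fphi_Pi, rule phi_rels)

definition aG :: "nat \<Rightarrow> nat set \<Rightarrow> nat set word set" where
  "aG N Z = pres_gen (GN_gens N) (GN_rels N) Z"

lemma G2_group: "group (G2 N)" unfolding G2_def by (rule pg_group)

lemma aG_carrier: "i \<in> {1..N} \<Longrightarrow> j \<in> {1..N} \<Longrightarrow> i \<noteq> j \<Longrightarrow> aG N {i,j} \<in> carrier (G2 N)"
  unfolding aG_def G2_def by (rule pg_gen_carrier) (rule in_GN)

lemma Gr1: assumes "i \<in> {1..N}" "j \<in> {1..N}" "i \<noteq> j"
  shows "aG N {i,j} \<otimes>\<^bsub>G2 N\<^esub> aG N {i,j} = \<one>\<^bsub>G2 N\<^esub>"
proof -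
  interpret D: group "G2 N" by (rule G2_group)
  have r: "(g1 {i,j} @ g1 {i,j}, []) \<in> GN_rels N" unfolding GN_rels_def using assms by blast
  have "evalw (G2 N) (pres_gen (GN_gens N) (GN_rels N)) (g1 {i,j} @ g1 {i,j}) =
        evalw (G2 N) (pres_gen (GN_gens N) (GN_rels N)) []"
    unfolding G2_def by (rule pg_rel[OF r]) (use assms in \<open>auto intro!: in_GN\<close>)
  then show ?thesis using aG_carrier[OF assms] by (simp add: aG_def)
qed

lemma Gr2: assumes "i \<in> {1..N}" "j \<in> {1..N}" "k \<in> {1..N}" "l \<in> {1..N}" "distinct [i,j,k,l]"
  shows "aG N {i,j} \<otimes>\<^bsub>G2 N\<^esub> aG N {k,l} = aG N {k,l} \<otimes>\<^bsub>G2 N\<^esub> aG N {i,j}"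
proof -
  interpret D: group "G2 N" by (rule G2_group)
  have r: "(g1 {i,j} @ g1 {k,l}, g1 {k,l} @ g1 {i,j}) \<in> GN_rels N"
    unfolding GN_rels_def using assms by blast
  have "evalw (G2 N) (pres_gen (GN_gens N) (GN_rels N)) (g1 {i,j} @ g1 {k,l}) =
        evalw (G2 N) (pres_gen (GN_gens N) (GN_rels N)) (g1 {k,l} @ g1 {i,j})"
    unfolding G2_def by (rule pg_rel[OF r]) (use assms in \<open>auto intro!: in_GN\<close>)
  then show ?thesis using aG_carrier assms by (simp add: aG_def)
qed

lemma Gr3: assumes "i \<in> {1..N}" "j \<in> {1..N}" "k \<in> {1..N}" "distinct [i,j,k]"
  shows "aG N {i,j} \<otimes>\<^bsub>G2 N\<^esub> (aG N {i,k} \<otimes>\<^bsub>G2 N\<^esub> aG N {j,k}) =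
         aG N {j,k} \<otimes>\<^bsub>G2 N\<^esub> (aG N {i,k} \<otimes>\<^bsub>G2 N\<^esub> aG N {i,j})"
proof -
  interpret D: group "G2 N" by (rule G2_group)
  have r: "(g1 {i,j} @ g1 {i,k} @ g1 {j,k}, g1 {j,k} @ g1 {i,k} @ g1 {i,j}) \<in> GN_rels N"
    unfolding GN_rels_def using assms by blast
  have "evalw (G2 N) (pres_gen (GN_gens N) (GN_rels N)) (g1 {i,j} @ g1 {i,k} @ g1 {j,k}) =
        evalw (G2 N) (pres_gen (GN_gens N) (GN_rels N)) (g1 {j,k} @ g1 {i,k} @ g1 {i,j})"
    unfolding G2_def by (rule pg_rel[OF r]) (use assms in \<open>auto intro!: in_GN\<close>)
  then show ?thesis using aG_carrier assms by (simp add: aG_def)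
qed

section \<open>The normal closure\<close>

definition Ycomm :: "nat \<Rightarrow> nat set word set set" where
  "Ycomm n = {a_G2 (Suc n) i (Suc n) \<otimes>\<^bsub>G2 (Suc n)\<^esub> a_G2 (Suc n) j (Suc n)
           \<otimes>\<^bsub>G2 (Suc n)\<^esub> inv\<^bsub>G2 (Suc n)\<^esub> (a_G2 (Suc n) i (Suc n))
           \<otimes>\<^bsub>G2 (Suc n)\<^esub> inv\<^bsub>G2 (Suc n)\<^esub> (a_G2 (Suc n) j (Suc n))
         | i j. i \<in> {1..n} \<and> j \<in> {1..n}}"

definition NCn :: "nat \<Rightarrow> nat set word set set" where
  "NCn n = normal_closure (G2 (Suc n)) (Ycomm n)"

lemma a_G2_aG: "a_G2 N i j = aG N {i,j}"
  by (simp add: a_G2_def aG_def)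

lemma Ycomm_carrier: "Ycomm n \<subseteq> carrier (G2 (Suc n))"
proof -
  interpret G: group "G2 (Suc n)" by (rule G2_group)
  have "aG (Suc n) {i, Suc n} \<in> carrier (G2 (Suc n))" if "i \<in> {1..n}" for i
    using that by (intro aG_carrier) auto
  then show ?thesis unfolding Ycomm_def a_G2_aG by (blast intro: G.m_closed G.inv_closed)
qed

context group begin

lemma conj_set_carrier:
  assumes "Y \<subseteq> carrier G"
  shows "(\<Union>g\<in>carrier G. (\<lambda>x. g \<otimes> x \<otimes> inv g) ` Y) \<subseteq> carrier G"
  using assms by auto

lemma normal_closure_normal:
  assumes "Y \<subseteq> carrier G"
  shows "normal_closure G Y \<lhd> G"
  unfolding normal_closure_def
proof (rule normal_generateI[OF conj_set_carrier[OF assms]])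
  fix h g assume h: "h \<in> (\<Union>g\<in>carrier G. (\<lambda>x. g \<otimes> x \<otimes> inv g) ` Y)"
    and g: "g \<in> carrier G"
  then obtain g' y where g': "g' \<in> carrier G" "y \<in> Y" "h = g' \<otimes> y \<otimes> inv g'" by auto
  have y: "y \<in> carrier G" using g' assms by auto
  have "g \<otimes> h \<otimes> inv g = (g \<otimes> g') \<otimes> y \<otimes> inv (g \<otimes> g')"
    using g g' y by (simp add: inv_mult_group m_assoc)
  then show "g \<otimes> h \<otimes> inv g \<in> (\<Union>g\<in>carrier G. (\<lambda>x. g \<otimes> x \<otimes> inv g) ` Y)"
    using g g' by blast
qed

lemma subset_normal_closure:
  assumes "Y \<subseteq> carrier G"
  shows "Y \<subseteq> normal_closure G Y"
proof
  fix y assume y: "y \<in> Y"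
  then have "y = \<one> \<otimes> y \<otimes> inv \<one>" using assms by auto
  then have "y \<in> (\<Union>g\<in>carrier G. (\<lambda>x. g \<otimes> x \<otimes> inv g) ` Y)"
    using y by blast
  then show "y \<in> normal_closure G Y" unfolding normal_closure_def by (rule generate.incl)
qed

lemma normal_closure_le:
  assumes "K \<lhd> G" "Y \<subseteq> K"
  shows "normal_closure G Y \<subseteq> K"
proof -
  interpret K: normal K G by fact
  show ?thesis unfolding normal_closure_def
  proof (rule generate_subgroup_incl)
    show "subgroup K G" by (rule K.subgroup_axioms)
    show "(\<Union>g\<in>carrier G. (\<lambda>x. g \<otimes> x \<otimes> inv g) ` Y) \<subseteq> K"
      using assms(2) K.inv_op_closed2 by auto
  qed
qed

end

lemma (in group) commutator_of_comm:
  assumes c: "p \<in> carrier G" "q \<in> carrier G" and H: "p \<otimes> q = q \<otimes> p"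
  shows "p \<otimes> q \<otimes> inv p \<otimes> inv q = \<one>"
proof -
  have "p \<otimes> q \<otimes> inv p \<otimes> inv q = q \<otimes> (p \<otimes> inv p) \<otimes> inv q" using c H by (simp add: m_assoc)
  also have "\<dots> = \<one>" using c by simp
  finally show ?thesis .
qed

section \<open>The quotient and the map psi\<close>

declare mult_FactGroup[simp del] one_FactGroup[simp del]

lemma NC_normal: "NCn n \<lhd> G2 (Suc n)"
  unfolding NCn_def by (rule group.normal_closure_normal[OF G2_group Ycomm_carrier])

lemma Q_group: "group (G2 (Suc n) Mod NCn n)"
  by (rule normal.factorgroup_is_group[OF NC_normal])

lemma proj_hom: "r_coset (G2 (Suc n)) (NCn n) \<in> hom (G2 (Suc n)) (G2 (Suc n) Mod NCn n)"
  by (rule normal.r_coset_hom_Mod[OF NC_normal])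

lemma proj_group_hom: "group_hom (G2 (Suc n)) (G2 (Suc n) Mod NCn n) (r_coset (G2 (Suc n)) (NCn n))"
  using G2_group Q_group proj_hom by (simp add: group_hom_def group_hom_axioms_def)

definition AQ :: "nat \<Rightarrow> nat set \<Rightarrow> nat set word set set" where
  "AQ n Z = r_coset (G2 (Suc n)) (NCn n) (aG (Suc n) Z)"

lemma AQ_carrier: "i \<in> {1..Suc n} \<Longrightarrow> j \<in> {1..Suc n} \<Longrightarrow> i \<noteq> j \<Longrightarrow> AQ n {i,j} \<in> carrier (G2 (Suc n) Mod NCn n)"
  unfolding AQ_def by (rule hom_in_carrier[OF proj_hom aG_carrier])

lemma proj_mult: "x \<in> carrier (G2 (Suc n)) \<Longrightarrow> y \<in> carrier (G2 (Suc n)) \<Longrightarrow>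
  r_coset (G2 (Suc n)) (NCn n) (x \<otimes>\<^bsub>G2 (Suc n)\<^esub> y) =
  r_coset (G2 (Suc n)) (NCn n) x \<otimes>\<^bsub>G2 (Suc n) Mod NCn n\<^esub> r_coset (G2 (Suc n)) (NCn n) y"
  by (rule hom_mult[OF proj_hom])

lemma proj_one: "r_coset (G2 (Suc n)) (NCn n) \<one>\<^bsub>G2 (Suc n)\<^esub> = \<one>\<^bsub>G2 (Suc n) Mod NCn n\<^esub>"
  by (rule hom_one[OF proj_hom G2_group Q_group])

lemma Q1: assumes "i \<in> {1..Suc n}" "j \<in> {1..Suc n}" "i \<noteq> j"
  shows "AQ n {i,j} \<otimes>\<^bsub>G2 (Suc n) Mod NCn n\<^esub> AQ n {i,j} = \<one>\<^bsub>G2 (Suc n) Mod NCn n\<^esub>"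
  unfolding AQ_def using assms
  by (simp add: proj_mult[symmetric] aG_carrier Gr1 proj_one del: One_nat_def)

lemma Q2: assumes "i \<in> {1..Suc n}" "j \<in> {1..Suc n}" "k \<in> {1..Suc n}" "l \<in> {1..Suc n}" "distinct [i,j,k,l]"
  shows "AQ n {i,j} \<otimes>\<^bsub>G2 (Suc n) Mod NCn n\<^esub> AQ n {k,l} = AQ n {k,l} \<otimes>\<^bsub>G2 (Suc n) Mod NCn n\<^esub> AQ n {i,j}"
  unfolding AQ_def using assms
  by (simp add: proj_mult[symmetric] aG_carrier Gr2[OF assms] del: One_nat_def)

lemma Q3: assumes "i \<in> {1..Suc n}" "j \<in> {1..Suc n}" "k \<in> {1..Suc n}" "distinct [i,j,k]"
  shows "AQ n {i,j} \<otimes>\<^bsub>G2 (Suc n) Mod NCn n\<^esub> (AQ n {i,k} \<otimes>\<^bsub>G2 (Suc n) Mod NCn n\<^esub> AQ n {j,k}) =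
         AQ n {j,k} \<otimes>\<^bsub>G2 (Suc n) Mod NCn n\<^esub> (AQ n {i,k} \<otimes>\<^bsub>G2 (Suc n) Mod NCn n\<^esub> AQ n {i,j})"
proof -
  interpret G: group "G2 (Suc n)" by (rule G2_group)
  have c: "aG (Suc n) {i,j} \<in> carrier (G2 (Suc n))" "aG (Suc n) {i,k} \<in> carrier (G2 (Suc n))"
     "aG (Suc n) {j,k} \<in> carrier (G2 (Suc n))" using assms by (auto intro!: aG_carrier)
  show ?thesis unfolding AQ_def using c
    by (simp add: proj_mult[symmetric] Gr3[OF assms] del: One_nat_def)
qed

lemma Q5: assumes "i \<in> {1..n}" "j \<in> {1..n}"
  shows "AQ n {i,Suc n} \<otimes>\<^bsub>G2 (Suc n) Mod NCn n\<^esub> AQ n {j,Suc n} = AQ n {j,Suc n} \<otimes>\<^bsub>G2 (Suc n) Mod NCn n\<^esub> AQ n {i,Suc n}"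
proof -
  interpret G: group "G2 (Suc n)" by (rule G2_group)
  interpret Q: group "G2 (Suc n) Mod NCn n" by (rule Q_group)
  interpret gh: group_hom "G2 (Suc n)" "G2 (Suc n) Mod NCn n" "r_coset (G2 (Suc n)) (NCn n)" by (rule proj_group_hom)
  interpret NC: normal "NCn n" "G2 (Suc n)" by (rule NC_normal)
  have ci: "aG (Suc n) {i,Suc n} \<in> carrier (G2 (Suc n))" and cj: "aG (Suc n) {j,Suc n} \<in> carrier (G2 (Suc n))"
    using assms by (auto intro!: aG_carrier)
  define c where "c = aG (Suc n) {i,Suc n} \<otimes>\<^bsub>G2 (Suc n)\<^esub> aG (Suc n) {j,Suc n}
     \<otimes>\<^bsub>G2 (Suc n)\<^esub> inv\<^bsub>G2 (Suc n)\<^esub> (aG (Suc n) {i,Suc n}) \<otimes>\<^bsub>G2 (Suc n)\<^esub> inv\<^bsub>G2 (Suc n)\<^esub> (aG (Suc n) {j,Suc n})"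
  have "c \<in> Ycomm n" unfolding c_def Ycomm_def a_G2_aG using assms by blast
  then have "c \<in> NCn n"
    using group.subset_normal_closure[OF G2_group Ycomm_carrier] unfolding NCn_def by blast
  then have "r_coset (G2 (Suc n)) (NCn n) c = NCn n" by (rule NC.rcos_const[OF G2_group])
  then have "AQ n {i,Suc n} \<otimes>\<^bsub>G2 (Suc n) Mod NCn n\<^esub> AQ n {j,Suc n} \<otimes>\<^bsub>G2 (Suc n) Mod NCn n\<^esub>
      inv\<^bsub>G2 (Suc n) Mod NCn n\<^esub> (AQ n {i,Suc n}) \<otimes>\<^bsub>G2 (Suc n) Mod NCn n\<^esub> inv\<^bsub>G2 (Suc n) Mod NCn n\<^esub> (AQ n {j,Suc n})
      = \<one>\<^bsub>G2 (Suc n) Mod NCn n\<^esub>"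
    unfolding c_def AQ_def using ci cj by (simp add: one_FactGroup)
  then show ?thesis
    by (rule Q.comm_from_commutator[rotated 2]) (use assms in \<open>auto intro!: AQ_carrier\<close>)
qed

definition fpsi :: "nat \<Rightarrow> nat set + nat \<Rightarrow> nat set word set set" where
  "fpsi n y = (case y of Inl Z \<Rightarrow> AQ n Z | Inr i \<Rightarrow> AQ n {i, Suc n})"

lemma fpsi_Pi: "fpsi n \<in> GD_gens n \<rightarrow> carrier (G2 (Suc n) Mod NCn n)"
  unfolding GD_gens_def GN_gens_def fpsi_def by (auto intro!: AQ_carrier)

lemma psi_rels:
  assumes "(u,v) \<in> GD_rels n"
  shows "evalw (G2 (Suc n) Mod NCn n) (fpsi n) u = evalw (G2 (Suc n) Mod NCn n) (fpsi n) v"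
proof -
  interpret Q: group "G2 (Suc n) Mod NCn n" by (rule Q_group)
  have up: "x \<in> {1..Suc n}" if "x \<in> {1..n}" for x using that by auto
  have Tc: "AQ n {i, Suc n} \<in> carrier (G2 (Suc n) Mod NCn n)" if "i \<in> {1..n}" for i
    using that by (intro AQ_carrier) auto
  have Ac: "AQ n {i, j} \<in> carrier (G2 (Suc n) Mod NCn n)" if "i \<in> {1..n}" "j \<in> {1..n}" "i \<noteq> j" for i j
    using that by (intro AQ_carrier) auto
  from assms consider
      (d1) i j where "u = g1 (Inl {i,j}) @ g1 (Inl {i,j})" "v = []" "i \<in> {1..n}" "j \<in> {1..n}" "i \<noteq> j"
    | (d2) i j k l where "u = g1 (Inl {i,j}) @ g1 (Inl {k,l})" "v = g1 (Inl {k,l}) @ g1 (Inl {i,j})"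
        "i \<in> {1..n}" "j \<in> {1..n}" "k \<in> {1..n}" "l \<in> {1..n}" "distinct [i,j,k,l]"
    | (d3) i j k where "u = g1 (Inl {i,j}) @ g1 (Inl {i,k}) @ g1 (Inl {j,k})"
        "v = g1 (Inl {j,k}) @ g1 (Inl {i,k}) @ g1 (Inl {i,j})"
        "i \<in> {1..n}" "j \<in> {1..n}" "k \<in> {1..n}" "distinct [i,j,k]"
    | (d4) i where "u = g1 (Inr i) @ g1 (Inr i)" "v = []" "i \<in> {1..n}"
    | (d5) i j where "u = g1 (Inr i) @ g1 (Inr j)" "v = g1 (Inr j) @ g1 (Inr i)" "i \<in> {1..n}" "j \<in> {1..n}"
    | (d6) i j where "u = g1 (Inr i) @ g1 (Inr j) @ g1 (Inl {i,j}) @ g1 (Inr j) @ g1 (Inr i)"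
        "v = g1 (Inl {i,j})" "i \<in> {1..n}" "j \<in> {1..n}" "i \<noteq> j"
    | (d7) i j k where "u = g1 (Inl {i,j}) @ g1 (Inr k)" "v = g1 (Inr k) @ g1 (Inl {i,j})"
        "i \<in> {1..n}" "j \<in> {1..n}" "k \<in> {1..n}" "distinct [i,j,k]"
    unfolding GD_rels_def by blast
  then show ?thesis
  proof cases
    case d1 then show ?thesis using Q1[of i n j] Ac[of i j] up[of i] up[of j] by (simp add: fpsi_def)
  next
    case d2 then show ?thesis using Q2[of i n j k l] Ac[of i j] Ac[of k l] up[of i] up[of j] up[of k] up[of l]
      by (simp add: fpsi_def)
  next
    case d3 then show ?thesis using Q3[of i n j k] Ac[of i j] Ac[of i k] Ac[of j k] up[of i] up[of j] up[of k]
      by (simp add: fpsi_def)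
  next
    case d4 then show ?thesis using Q1[of i n "Suc n"] Tc[of i] up[of i] by (simp add: fpsi_def)
  next
    case d5 then show ?thesis using Q5[of i n j] Tc[of i] Tc[of j] by (simp add: fpsi_def)
  next
    case d6
    have "AQ n {i, Suc n} \<otimes>\<^bsub>G2 (Suc n) Mod NCn n\<^esub> (AQ n {j, Suc n} \<otimes>\<^bsub>G2 (Suc n) Mod NCn n\<^esub>
          (AQ n {i,j} \<otimes>\<^bsub>G2 (Suc n) Mod NCn n\<^esub> (AQ n {j, Suc n} \<otimes>\<^bsub>G2 (Suc n) Mod NCn n\<^esub> AQ n {i, Suc n})))
          = AQ n {i,j}"
    proof (rule Q.invol_L3)
      show "AQ n {i,j} \<otimes>\<^bsub>G2 (Suc n) Mod NCn n\<^esub> (AQ n {i, Suc n} \<otimes>\<^bsub>G2 (Suc n) Mod NCn n\<^esub> AQ n {j, Suc n}) =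
            AQ n {j, Suc n} \<otimes>\<^bsub>G2 (Suc n) Mod NCn n\<^esub> (AQ n {i, Suc n} \<otimes>\<^bsub>G2 (Suc n) Mod NCn n\<^esub> AQ n {i,j})"
        using d6 by (intro Q3) auto
      show "AQ n {i, Suc n} \<otimes>\<^bsub>G2 (Suc n) Mod NCn n\<^esub> AQ n {j, Suc n} = AQ n {j, Suc n} \<otimes>\<^bsub>G2 (Suc n) Mod NCn n\<^esub> AQ n {i, Suc n}"
        using d6 by (intro Q5) auto
      show "AQ n {i, Suc n} \<otimes>\<^bsub>G2 (Suc n) Mod NCn n\<^esub> AQ n {i, Suc n} = \<one>\<^bsub>G2 (Suc n) Mod NCn n\<^esub>"
        using d6 by (intro Q1) auto
      show "AQ n {j, Suc n} \<otimes>\<^bsub>G2 (Suc n) Mod NCn n\<^esub> AQ n {j, Suc n} = \<one>\<^bsub>G2 (Suc n) Mod NCn n\<^esub>"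
        using d6 by (intro Q1) auto
    qed (use d6 Tc Ac in auto)
    then show ?thesis using d6 Tc[of i] Tc[of j] Ac[of i j] by (simp add: fpsi_def)
  next
    case d7
    have "AQ n {i,j} \<otimes>\<^bsub>G2 (Suc n) Mod NCn n\<^esub> AQ n {k, Suc n} = AQ n {k, Suc n} \<otimes>\<^bsub>G2 (Suc n) Mod NCn n\<^esub> AQ n {i,j}"
      using d7 by (intro Q2) auto
    then show ?thesis using d7 Tc[of k] Ac[of i j] by (simp add: fpsi_def)
  qed
qed

interpretation psi: pres_target "G2 (Suc n) Mod NCn n" "GD_gens n" "GD_rels n" "fpsi n"
  by (rule pres_target.intro[OF Q_group]) (unfold_locales, rule fpsi_Pi, rule psi_rels)

lemma main_iso: "G2D n \<cong> (G2 (Suc n) Mod NCn n)"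
proof -
  interpret G: group "G2 (Suc n)" by (rule G2_group)
  interpret D: group "G2D n" by (rule G2D_group)
  interpret Q: group "G2 (Suc n) Mod NCn n" by (rule Q_group)
  define \<phi> where "\<phi> = pres_hom (G2D n) (fphi n)"
  define \<psi> where "\<psi> = pres_hom (G2 (Suc n) Mod NCn n) (fpsi n)"
  have h\<phi>: "\<phi> \<in> hom (G2 (Suc n)) (G2D n)" unfolding \<phi>_def G2_def by (rule phi.pres_hom_hom)
  have h\<psi>: "\<psi> \<in> hom (G2D n) (G2 (Suc n) Mod NCn n)" unfolding \<psi>_def G2D_def by (rule psi.pres_hom_hom)
  have \<phi>gen: "\<phi> (aG (Suc n) Z) = fphi n Z" if "Z \<in> GN_gens (Suc n)" for Z
    unfolding \<phi>_def aG_def by (rule phi.pres_hom_gen[OF that])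
  have \<psi>gen: "\<psi> (pres_gen (GD_gens n) (GD_rels n) y) = fpsi n y" if "y \<in> GD_gens n" for y
    unfolding \<psi>_def by (rule psi.pres_hom_gen[OF that])
  interpret gh: group_hom "G2 (Suc n)" "G2D n" \<phi>
    using h\<phi> by (simp add: group_hom_def group_hom_axioms_def G2_group G2D_group)
  have onto: "\<phi> ` carrier (G2 (Suc n)) = carrier (G2D n)"
    unfolding G2D_def
  proof (rule pg_hom_onto[OF G2_group h\<phi>[unfolded G2D_def]])
    fix y assume "y \<in> GD_gens n"
    then consider (l) i j where "y = Inl {i,j}" "i \<in> {1..n}" "j \<in> {1..n}" "i \<noteq> j"
      | (r) i where "y = Inr i" "i \<in> {1..n}"
      unfolding GD_gens_def GN_gens_def by blast
    then show "pres_gen (GD_gens n) (GD_rels n) y \<in> \<phi> ` carrier (G2 (Suc n))"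
    proof cases
      case l
      have Z: "{i,j} \<in> GN_gens (Suc n)" using l by (intro in_GN) auto
      have "\<phi> (aG (Suc n) {i,j}) = bD n {i,j}" using l \<phi>gen[OF Z] by (simp add: fphi_eq)
      moreover have "aG (Suc n) {i,j} \<in> carrier (G2 (Suc n))" using l by (intro aG_carrier) auto
      ultimately show ?thesis using l by (auto simp: bD_def)
    next
      case r
      have Z: "{i, Suc n} \<in> GN_gens (Suc n)" using r by (intro in_GN) auto
      have "\<phi> (aG (Suc n) {i, Suc n}) = tD n i" using r \<phi>gen[OF Z] by (simp add: fphi_eq)
      moreover have "aG (Suc n) {i, Suc n} \<in> carrier (G2 (Suc n))" using r by (intro aG_carrier) auto
      ultimately show ?thesis using r by (auto simp: tD_def)
    qed
  qed
  have ker: "kernel (G2 (Suc n)) (G2D n) \<phi> = NCn n"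
  proof
    show "NCn n \<subseteq> kernel (G2 (Suc n)) (G2D n) \<phi>"
      unfolding NCn_def
    proof (rule G.normal_closure_le[OF gh.normal_kernel])
      show "Ycomm n \<subseteq> kernel (G2 (Suc n)) (G2D n) \<phi>"
      proof
        fix c assume c: "c \<in> Ycomm n"
        then obtain i j where ij: "i \<in> {1..n}" "j \<in> {1..n}" and
          ceq: "c = aG (Suc n) {i, Suc n} \<otimes>\<^bsub>G2 (Suc n)\<^esub> aG (Suc n) {j, Suc n}
           \<otimes>\<^bsub>G2 (Suc n)\<^esub> inv\<^bsub>G2 (Suc n)\<^esub> (aG (Suc n) {i, Suc n})
           \<otimes>\<^bsub>G2 (Suc n)\<^esub> inv\<^bsub>G2 (Suc n)\<^esub> (aG (Suc n) {j, Suc n})"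
          unfolding Ycomm_def a_G2_aG by blast
        have ci: "aG (Suc n) {i, Suc n} \<in> carrier (G2 (Suc n))" "aG (Suc n) {j, Suc n} \<in> carrier (G2 (Suc n))"
          using ij by (auto intro!: aG_carrier)
        have Zi: "{i, Suc n} \<in> GN_gens (Suc n)" "{j, Suc n} \<in> GN_gens (Suc n)" using ij by (auto intro!: in_GN)
        have pi: "\<phi> (aG (Suc n) {i, Suc n}) = tD n i" "\<phi> (aG (Suc n) {j, Suc n}) = tD n j"
          using \<phi>gen[OF Zi(1)] \<phi>gen[OF Zi(2)] ij by (auto simp: fphi_eq)
        have "\<phi> c = tD n i \<otimes>\<^bsub>G2D n\<^esub> tD n j \<otimes>\<^bsub>G2D n\<^esub> inv\<^bsub>G2D n\<^esub> (tD n i) \<otimes>\<^bsub>G2D n\<^esub> inv\<^bsub>G2D n\<^esub> (tD n j)"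
          unfolding ceq using ci by (simp add: pi)
        also have "\<dots> = \<one>\<^bsub>G2D n\<^esub>"
          by (rule group.commutator_of_comm[OF G2D_group]) (use ij in \<open>simp_all add: tD_carrier D5\<close>)
        finally show "c \<in> kernel (G2 (Suc n)) (G2D n) \<phi>"
          using c Ycomm_carrier by (auto simp: kernel_def)
      qed
    qed
  next
    show "kernel (G2 (Suc n)) (G2D n) \<phi> \<subseteq> NCn n"
    proof
      fix x assume "x \<in> kernel (G2 (Suc n)) (G2D n) \<phi>"
      then have x: "x \<in> carrier (G2 (Suc n))" "\<phi> x = \<one>\<^bsub>G2D n\<^esub>" by (auto simp: kernel_def)
      have comp: "(\<psi> \<circ> \<phi>) x = r_coset (G2 (Suc n)) (NCn n) x"
      proof -
      have Peq: "presented_group (GN_gens (Suc n)) (GN_rels (Suc n)) = G2 (Suc n)" by (simp add: G2_def)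
      have h1: "\<psi> \<circ> \<phi> \<in> hom (presented_group (GN_gens (Suc n)) (GN_rels (Suc n))) (G2 (Suc n) Mod NCn n)"
        using hom_compose[OF h\<phi> h\<psi>] by (simp only: Peq)
      have h2: "r_coset (G2 (Suc n)) (NCn n) \<in> hom (presented_group (GN_gens (Suc n)) (GN_rels (Suc n))) (G2 (Suc n) Mod NCn n)"
        using proj_hom[of n] by (simp only: Peq)
      show ?thesis
      proof (rule pg_homs_agree[OF Q_group h1 h2])
        show "x \<in> carrier (presented_group (GN_gens (Suc n)) (GN_rels (Suc n)))"
          using x(1) by (simp add: G2_def)
      next
        fix Z assume Z: "Z \<in> GN_gens (Suc n)"
        then obtain i j where ij: "Z = {i,j}" "i \<in> {1..Suc n}" "j \<in> {1..Suc n}" "i \<noteq> j"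
          unfolding GN_gens_def by blast
        have pZ: "\<phi> (aG (Suc n) Z) = fphi n Z" by (rule \<phi>gen[OF Z])
        have "\<psi> (fphi n {i,j}) = AQ n {i,j}"
        proof -
          consider "i = Suc n" | "j = Suc n" | "i \<noteq> Suc n" "j \<noteq> Suc n" by blast
          then show ?thesis
          proof cases
            case 1
            then have "j \<in> {1..n}" using ij by auto
            then have "\<psi> (tD n j) = AQ n {j, Suc n}" unfolding tD_def
              by (subst \<psi>gen) (auto simp: fpsi_def intro: in_GD_Inr)
            then show ?thesis using 1 ij by (simp add: fphi_eq insert_commute)
          next
            case 2
            then have "i \<in> {1..n}" using ij by auto
            then have "\<psi> (tD n i) = AQ n {i, Suc n}" unfolding tD_def
              by (subst \<psi>gen) (auto simp: fpsi_def intro: in_GD_Inr)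
            then show ?thesis using 2 ij by (simp add: fphi_eq)
          next
            case 3
            then have "i \<in> {1..n}" "j \<in> {1..n}" using ij by auto
            then have "\<psi> (bD n {i,j}) = AQ n {i,j}" unfolding bD_def using ij(4)
              by (subst \<psi>gen) (auto simp: fpsi_def intro: in_GD_Inl)
            then show ?thesis using 3 ij by (simp add: fphi_eq)
          qed
        qed
        then show "(\<psi> \<circ> \<phi>) (pres_gen (GN_gens (Suc n)) (GN_rels (Suc n)) Z) =
                   r_coset (G2 (Suc n)) (NCn n) (pres_gen (GN_gens (Suc n)) (GN_rels (Suc n)) Z)"
          using pZ ij(1) by (simp add: aG_def AQ_def)
      qed
      qed
      have "(\<psi> \<circ> \<phi>) x = \<one>\<^bsub>G2 (Suc n) Mod NCn n\<^esub>"
        using x(2) hom_one[OF h\<psi> G2D_group Q_group] by simp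
      then have "r_coset (G2 (Suc n)) (NCn n) x = NCn n" using comp by (simp add: one_FactGroup)
      moreover have "x \<in> r_coset (G2 (Suc n)) (NCn n) x"
        using G.rcos_self[OF x(1)] normal.axioms(1)[OF NC_normal] by blast
      ultimately show "x \<in> NCn n" by simp
    qed
  qed
  have "G2 (Suc n) Mod NCn n \<cong> G2D n" using gh.FactGroup_iso[OF onto] ker by simp
  then show ?thesis by (rule group.iso_sym[OF Q_group])
qed

theorem mainTheorem8:
  fixes n :: nat
  assumes "n > 2"
  shows "G2D n \<cong>
    (G2 (n + 1) Mod
      normal_closure (G2 (n + 1))
        {a_G2 (n + 1) i (n + 1) \<otimes>\<^bsub>G2 (n + 1)\<^esub> a_G2 (n + 1) j (n + 1)
           \<otimes>\<^bsub>G2 (n + 1)\<^esub> inv\<^bsub>G2 (n + 1)\<^esub> (a_G2 (n + 1) i (n + 1))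
           \<otimes>\<^bsub>G2 (n + 1)\<^esub> inv\<^bsub>G2 (n + 1)\<^esub> (a_G2 (n + 1) j (n + 1))
         | i j. i \<in> {1..n} \<and> j \<in> {1..n}})"
  using main_iso[of n] unfolding NCn_def Ycomm_def by simp

end
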